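(* Let $G$ be a directed graph on vertex set $V$ with $|V|=n$, and let $E^+\subseteq V\times V$ be a set of at most $f$ edges. Let $H$ be the graph on $V$ whose edge set consists of the following edges: (1) for each strongly connected component $S$ of $G$, the edges of a directed cycle on the vertices of $S$; (2) for each $uv\in E^+$ and each $w\in V$, an edge $vw$ if $v$ can reach $w$ in $G\cup E^+$, and an edge $wv$ if $w$ can reach $v$ in $G\cup E^+$. (Then $H$ has $O(nf)$ edges.) Then for all $u,v\in V$, $u$ and $v$ are strongly connected in $G\cup E^+$ if and only if they are strongly connected in $H$.
   Context: Two vertices are strongly connected if each can reach the other; strongly connected components are the equivalence classes of this relation. *)

theory Defs
  imports Main
begin

definition strongly_connected :: "('a \<times> 'a) set \<Rightarrow> 'a \<Rightarrow> 'a \<Rightarrow> bool" where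
  "strongly_connected E u v \<longleftrightarrow> (u, v) \<in> E\<^sup>* \<and> (v, u) \<in> E\<^sup>*"

definition sccs :: "'a set \<Rightarrow> ('a \<times> 'a) set \<Rightarrow> 'a set set" where
  "sccs V E = (\<lambda>v. {w \<in> V. strongly_connected E v w}) ` V"

text \<open>C is the edge set of a directed cycle through all vertices of S
  (visiting each exactly once): consecutive pairs of a cyclic enumeration of S.
  For a singleton S this is a single self-loop.\<close>
definition is_cycle_on :: "'a set \<Rightarrow> ('a \<times> 'a) set \<Rightarrow> bool" where
  "is_cycle_on S C \<longleftrightarrow> (\<exists>xs. distinct xs \<and> set xs = S \<and>
      C = {(xs ! i, xs ! ((i + 1) mod length xs)) | i. i < length xs})"

definition extra_edges :: "'a set \<Rightarrow> ('a \<times> 'a) set \<Rightarrow> ('a \<times> 'a) set \<Rightarrow> ('a \<times> 'a) set" where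
  "extra_edges V E Eplus =
     {(v, w) | u v w. (u, v) \<in> Eplus \<and> w \<in> V \<and> (v, w) \<in> (E \<union> Eplus)\<^sup>*} \<union>
     {(w, v) | u v w. (u, v) \<in> Eplus \<and> w \<in> V \<and> (w, v) \<in> (E \<union> Eplus)\<^sup>*}"

end

theory Submission
  imports Defs
begin

lemma path_split:
  assumes "(x, y) \<in> (E \<union> F)\<^sup>*"
  shows "(x, y) \<in> E\<^sup>* \<or> (\<exists>a b. (a, b) \<in> F \<and> (x, a) \<in> (E \<union> F)\<^sup>* \<and> (b, y) \<in> (E \<union> F)\<^sup>*)"
  using assms
proof (induction rule: rtrancl_induct)
  case base
  then show ?case by simp
next
  case (step y z)
  show ?case
  proof (cases "(y, z) \<in> F")
    case True
    then show ?thesis using step(1) by blast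
  next
    case False
    then have "(y, z) \<in> E" using step(2) by blast
    with step(3) show ?thesis
      by (meson rtrancl.rtrancl_into_rtrancl rtrancl_into_rtrancl Un_iff)
  qed
qed

lemma cycle_reach:
  assumes "is_cycle_on S C" "x \<in> S" "y \<in> S"
  shows "(x, y) \<in> C\<^sup>*"
proof -
  obtain xs where d: "distinct xs" "set xs = S"
    and C: "C = {(xs ! i, xs ! ((i + 1) mod length xs)) | i. i < length xs}"
    using assms(1) unfolding is_cycle_on_def by blast
  obtain i where i: "i < length xs" "x = xs ! i" using assms(2) d(2) by (metis in_set_conv_nth)
  obtain j where j: "j < length xs" "y = xs ! j" using assms(3) d(2) by (metis in_set_conv_nth)
  let ?l = "length xs"
  have k: "(xs ! i, xs ! ((i + k) mod ?l)) \<in> C\<^sup>*" for k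
  proof (induction k)
    case 0
    then show ?case using i by simp
  next
    case (Suc k)
    have l0: "0 < ?l" using i(1) by linarith
    have lt: "(i + k) mod ?l < ?l" using l0 by simp
    have "(xs ! ((i + k) mod ?l), xs ! (((i + k) mod ?l + 1) mod ?l)) \<in> C"
      unfolding C using lt by auto
    moreover have "((i + k) mod ?l + 1) mod ?l = (i + Suc k) mod ?l"
      by (simp add: mod_Suc_eq)
    ultimately show ?case using Suc by (metis rtrancl.rtrancl_into_rtrancl)
  qed
  have "(i + (j + ?l - i)) mod ?l = j" using i j by simp
  then show ?thesis using k[of "j + ?l - i"] i j by simp
qed

theorem lemma9:
  fixes V :: "'a set" and E Eplus H :: "('a \<times> 'a) set" and n f :: nat
    and cyc :: "'a set \<Rightarrow> ('a \<times> 'a) set"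
  assumes "finite V" and "card V = n"
    and "E \<subseteq> V \<times> V"
    and "Eplus \<subseteq> V \<times> V" and "card Eplus \<le> f"
    and "\<forall>S \<in> sccs V E. is_cycle_on S (cyc S)"
    and "H = (\<Union>S \<in> sccs V E. cyc S) \<union> extra_edges V E Eplus"
  shows "\<forall>u \<in> V. \<forall>v \<in> V.
           strongly_connected (E \<union> Eplus) u v \<longleftrightarrow> strongly_connected H u v"
proof -
  let ?G = "E \<union> Eplus"
  have Hsub: "H \<subseteq> ?G\<^sup>*"
  proof
    fix p assume "p \<in> H"
    then consider (c) S where "S \<in> sccs V E" "p \<in> cyc S" | (x) "p \<in> extra_edges V E Eplus"
      using assms(7) by blast
    then show "p \<in> ?G\<^sup>*"
    proof cases
      case c
      then obtain x where x: "x \<in> V" "S = {w \<in> V. strongly_connected E x w}"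
        unfolding sccs_def by blast
      obtain xs where d: "set xs = S"
        and C: "cyc S = {(xs ! i, xs ! ((i + 1) mod length xs)) | i. i < length xs}"
        using assms(6) c(1) unfolding is_cycle_on_def by blast
      obtain i where i: "i < length xs" "p = (xs ! i, xs ! ((i + 1) mod length xs))"
        using C c(2) by blast
      have l0: "0 < length xs" using i(1) by linarith
      have "xs ! i \<in> S" using i d nth_mem by blast
      moreover have "xs ! ((i + 1) mod length xs) \<in> S" using l0 d nth_mem mod_less_divisor by blast
      ultimately obtain a b where ab: "p = (a, b)" "a \<in> S" "b \<in> S" using i by blast
      then have "(a, x) \<in> E\<^sup>*" "(x, b) \<in> E\<^sup>*" using x unfolding strongly_connected_def by auto
      then have "(a, b) \<in> E\<^sup>*" by simp
      then show ?thesis using ab(1) rtrancl_mono[of E ?G] by blast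
    next
      case x
      then show ?thesis unfolding extra_edges_def by blast
    qed
  qed
  have H1: "(a, b) \<in> H\<^sup>* \<Longrightarrow> (a, b) \<in> ?G\<^sup>*" for a b
  proof -
    assume "(a, b) \<in> H\<^sup>*"
    then have "(a, b) \<in> (?G\<^sup>*)\<^sup>*" using rtrancl_mono[OF Hsub] by blast
    then show ?thesis by simp
  qed
  have viaB: "(x, y) \<in> H\<^sup>*" if "x \<in> V" "y \<in> V" "(a, b) \<in> Eplus"
    "(x, b) \<in> ?G\<^sup>*" "(b, y) \<in> ?G\<^sup>*" for x y a b
  proof -
    have "(x, b) \<in> extra_edges V E Eplus" unfolding extra_edges_def using that by blast
    moreover have "(b, y) \<in> extra_edges V E Eplus" unfolding extra_edges_def using that by blast
    ultimately have "(x, b) \<in> H" "(b, y) \<in> H" unfolding assms(7) by blast+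
    then show ?thesis by (meson converse_rtrancl_into_rtrancl r_into_rtrancl)
  qed
  have key: "(x, y) \<in> H\<^sup>*" if xy: "x \<in> V" "y \<in> V" "strongly_connected ?G x y" for x y
  proof -
    have p1: "(x, y) \<in> ?G\<^sup>*" and p2: "(y, x) \<in> ?G\<^sup>*"
      using xy(3) unfolding strongly_connected_def by auto
    from path_split[OF p1] show ?thesis
    proof
      assume e1: "(x, y) \<in> E\<^sup>*"
      from path_split[OF p2] show ?thesis
      proof
        assume e2: "(y, x) \<in> E\<^sup>*"
        define S where "S = {w \<in> V. strongly_connected E x w}"
        have S: "S \<in> sccs V E" using xy(1) unfolding S_def sccs_def by (rule imageI)
        have "x \<in> S" "y \<in> S" using xy e1 e2 unfolding S_def strongly_connected_def by auto
        then have "(x, y) \<in> (cyc S)\<^sup>*" using cycle_reach[of S "cyc S" x y] assms(6) S by simp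
        moreover have "cyc S \<subseteq> H" unfolding assms(7) using S by (intro Un_upper1[THEN subset_trans[rotated]] UN_upper)
        ultimately show ?thesis using rtrancl_mono[of "cyc S" H] by (rule_tac subsetD)
      next
        assume "\<exists>a b. (a, b) \<in> Eplus \<and> (y, a) \<in> ?G\<^sup>* \<and> (b, x) \<in> ?G\<^sup>*"
        then obtain a b where ab: "(a, b) \<in> Eplus" "(y, a) \<in> ?G\<^sup>*" "(b, x) \<in> ?G\<^sup>*" by blast
        have "(a, b) \<in> ?G\<^sup>*" using ab(1) by blast
        then have "(x, b) \<in> ?G\<^sup>*" using p1 ab(2) by (meson rtrancl_trans)
        moreover have "(b, y) \<in> ?G\<^sup>*" using p1 ab(3) by (meson rtrancl_trans)
        ultimately show ?thesis using viaB xy ab(1) by blast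
      qed
    next
      assume "\<exists>a b. (a, b) \<in> Eplus \<and> (x, a) \<in> ?G\<^sup>* \<and> (b, y) \<in> ?G\<^sup>*"
      then obtain a b where ab: "(a, b) \<in> Eplus" "(x, a) \<in> ?G\<^sup>*" "(b, y) \<in> ?G\<^sup>*" by blast
      have "(a, b) \<in> ?G\<^sup>*" using ab(1) by blast
      then have "(x, b) \<in> ?G\<^sup>*" using ab(2) by (meson rtrancl_trans)
      then show ?thesis using viaB xy ab by blast
    qed
  qed
  show ?thesis
  proof (intro ballI iffI)
    fix u v assume uv: "u \<in> V" "v \<in> V" "strongly_connected ?G u v"
    then have "strongly_connected ?G v u" unfolding strongly_connected_def by blast
    then show "strongly_connected H u v" using key uv unfolding strongly_connected_def by blast
  next
    fix u v assume "u \<in> V" "v \<in> V" "strongly_connected H u v"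
    then show "strongly_connected ?G u v" using H1 unfolding strongly_connected_def by blast
  qed
qed

end
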